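(* Let $A$ be a $\Bbbk$-algebra which is a domain. For $k=1,\dots,m$ let $\varphi_k$ be algebra automorphisms of $A$ and $\partial_k$ locally nilpotent skew derivations of $A$ with respect to $\varphi_k$, and suppose $\partial_\ell\circ\varphi_k=q_{k\ell}\,\varphi_k\circ\partial_\ell$ for all $1\le k\le\ell\le m$, where $q_{k\ell}\in\Bbbk^\times$ and each $q_{kk}$ is not a root of unity. Then the string map $\nu=\nu_{(\partial_1,\dots,\partial_m)}:A\setminus\{0\}\to\mathbb Z_{\ge0}^m$ is a valuation (with respect to the lexicographic order) satisfying $\nu(ab)=\nu(a)+\nu(b)$ for all nonzero $a,b\in A$.
   Context: A skew derivation with respect to $\varphi$ is a linear map $\partial$ with $\partial(ab)=\partial(a)b+\varphi(a)\partial(b)$. For a locally nilpotent linear map $E$ and $x\ne0$, $\nu_E(x)$ is the largest $n\ge0$ with $E^n(x)\ne0$, and $\lambda_E(x)=E^{\nu_E(x)}(x)$ (up to a nonzero scalar). The string map is defined by $\nu_{(\partial_1,\dots,\partial_m)}(x)=(a_1,\dots,a_m)$ where $x_0=x$, $a_k=\nu_{\partial_k}(x_{k-1})$ and $x_k=\partial_k^{a_k}(x_{k-1})$. The lexicographic order on $\mathbb Z_{\ge0}^m$ compares the first coordinate first. A valuation into an ordered set $C$ means $\nu(cx)=\nu(x)$ for $c\in\Bbbk^\times$ and $\nu(x+y)\le\max(\nu(x),\nu(y))$ when $x+y\ne0$. *)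

theory Defs
  imports Main "HOL-Library.List_Lexorder"
begin

text \<open>A \<open>k\<close>-algebra structure on a ring \<open>'a\<close> is given by a central unital ring
  homomorphism \<open>\<iota> : k \<rightarrow> A\<close>; scalar multiplication is \<open>c \<cdot> x = \<iota> c * x\<close>.\<close>

definition k_algebra :: "('k::field \<Rightarrow> 'a::ring_1) \<Rightarrow> bool" where
  "k_algebra \<iota> \<longleftrightarrow> \<iota> 1 = 1 \<and> (\<forall>c d. \<iota> (c + d) = \<iota> c + \<iota> d)
     \<and> (\<forall>c d. \<iota> (c * d) = \<iota> c * \<iota> d) \<and> (\<forall>c x. \<iota> c * x = x * \<iota> c)"

definition k_linear :: "('k::field \<Rightarrow> 'a::ring_1) \<Rightarrow> ('a \<Rightarrow> 'a) \<Rightarrow> bool" where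
  "k_linear \<iota> f \<longleftrightarrow> (\<forall>x y. f (x + y) = f x + f y) \<and> (\<forall>c x. f (\<iota> c * x) = \<iota> c * f x)"

definition algebra_automorphism :: "('k::field \<Rightarrow> 'a::ring_1) \<Rightarrow> ('a \<Rightarrow> 'a) \<Rightarrow> bool" where
  "algebra_automorphism \<iota> f \<longleftrightarrow> k_linear \<iota> f \<and> bij f \<and> f 1 = 1 \<and> (\<forall>x y. f (x * y) = f x * f y)"

definition skew_derivation :: "('k::field \<Rightarrow> 'a::ring_1) \<Rightarrow> ('a \<Rightarrow> 'a) \<Rightarrow> ('a \<Rightarrow> 'a) \<Rightarrow> bool" where
  "skew_derivation \<iota> \<phi> D \<longleftrightarrow> k_linear \<iota> D \<and> (\<forall>a b. D (a * b) = D a * b + \<phi> a * D b)"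

definition locally_nilpotent :: "('a::zero \<Rightarrow> 'a) \<Rightarrow> bool" where
  "locally_nilpotent E \<longleftrightarrow> (\<forall>x. \<exists>n. (E ^^ n) x = 0)"

definition root_of_unity :: "'k::field \<Rightarrow> bool" where
  "root_of_unity q \<longleftrightarrow> (\<exists>n>0. q ^ n = 1)"

definition nu_E :: "('a::zero \<Rightarrow> 'a) \<Rightarrow> 'a \<Rightarrow> nat" where
  "nu_E E x = (GREATEST n. (E ^^ n) x \<noteq> 0)"

fun string_map :: "('a::zero \<Rightarrow> 'a) list \<Rightarrow> 'a \<Rightarrow> nat list" where
  "string_map [] x = []"
| "string_map (E # Es) x = nu_E E x # string_map Es ((E ^^ nu_E E x) x)"

definition vec_add :: "nat list \<Rightarrow> nat list \<Rightarrow> nat list" where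
  "vec_add u v = map2 (+) u v"

end

theory Submission
  imports Defs
begin

lemma funpow_zero: fixes E :: "'a::zero \<Rightarrow> 'a" shows "E 0 = 0 \<Longrightarrow> (E ^^ k) 0 = 0"
  by (induction k) auto

lemma funpow_vanish:
  fixes E :: "'a::zero \<Rightarrow> 'a"
  assumes "E 0 = 0" "(E ^^ n) x = 0" "n \<le> k"
  shows "(E ^^ k) x = 0"
proof -
  have "k = (k - n) + n" using assms(3) by simp
  then have "(E ^^ k) x = (E ^^ (k - n)) ((E ^^ n) x)"
    by (metis comp_apply funpow_add)
  with assms(2) funpow_zero[of E, OF assms(1)] show ?thesis by simp
qed

lemma nu_eqI:
  assumes "E 0 = 0" "(E ^^ n) x \<noteq> 0" "(E ^^ Suc n) x = (0::'a::zero)"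
  shows "nu_E E x = n"
  unfolding nu_E_def
proof (rule Greatest_equality)
  show "(E ^^ n) x \<noteq> 0" by fact
  fix y assume y: "(E ^^ y) x \<noteq> 0"
  show "y \<le> n"
  proof (rule ccontr)
    assume "\<not> y \<le> n"
    then have "y = (y - Suc n) + Suc n" by simp
    then have "(E ^^ y) x = (E ^^ (y - Suc n)) ((E ^^ Suc n) x)"
      by (metis comp_apply funpow_add)
    with assms(3) funpow_zero[of E, OF assms(1)] y show False by simp
  qed
qed

lemma nu_props:
  assumes E0: "E 0 = 0" and ln: "locally_nilpotent E" and x: "x \<noteq> (0::'a::zero)"
  shows "(E ^^ nu_E E x) x \<noteq> 0" and "nu_E E x < n \<Longrightarrow> (E ^^ n) x = 0"
proof -
  obtain N where N: "(E ^^ N) x = 0" using ln unfolding locally_nilpotent_def by blast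
  have bd: "\<forall>y. (E ^^ y) x \<noteq> 0 \<longrightarrow> y \<le> N"
  proof (intro allI impI, rule ccontr)
    fix y assume y: "(E ^^ y) x \<noteq> 0" "\<not> y \<le> N"
    then have "y = (y - N) + N" by simp
    then have "(E ^^ y) x = (E ^^ (y - N)) ((E ^^ N) x)"
      by (metis comp_apply funpow_add)
    with N funpow_zero[of E, OF E0] y show False by simp
  qed
  have p0: "(E ^^ 0) x \<noteq> 0" using x by simp
  show "(E ^^ nu_E E x) x \<noteq> 0" unfolding nu_E_def
    by (rule GreatestI_nat[of "\<lambda>n. (E ^^ n) x \<noteq> 0" 0 N, OF p0]) (use bd in blast)
  assume "nu_E E x < n"
  then show "(E ^^ n) x = 0"
    unfolding nu_E_def using Greatest_le_nat[of "\<lambda>n. (E ^^ n) x \<noteq> 0" n N] bd by force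
qed

lemma funpow_add_hom:
  fixes E :: "'a::ab_group_add \<Rightarrow> 'a"
  assumes "\<forall>x y. E (x + y) = E x + E y"
  shows "(E ^^ n) (x + y) = (E ^^ n) x + (E ^^ n) y"
  by (induction n) (auto simp: assms)

lemma max_Cons: "max (a # u) (a # v) = a # max u (v::'b::linorder list)"
  by (auto simp: max_def)

lemma val_string:
  assumes "\<forall>E \<in> set Es. (\<forall>x y. E (x + y) = E x + E y) \<and> locally_nilpotent E"
  shows "x \<noteq> 0 \<Longrightarrow> y \<noteq> 0 \<Longrightarrow> x + y \<noteq> (0::'a::ab_group_add) \<Longrightarrow>
     string_map Es (x + y) \<le> max (string_map Es x) (string_map Es y)"
  using assms
proof (induction Es arbitrary: x y)
  case Nil then show ?case by simp
next
  case (Cons E Es)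
  have add: "\<forall>x y. E (x + y) = E x + E y" and ln: "locally_nilpotent E"
    using Cons.prems(4) by auto
  have E0: "E 0 = 0" using add by (metis add_cancel_right_right)
  have IH: "\<And>x y. x \<noteq> 0 \<Longrightarrow> y \<noteq> 0 \<Longrightarrow> x + y \<noteq> 0 \<Longrightarrow>
     string_map Es (x + y) \<le> max (string_map Es x) (string_map Es y)"
    using Cons.IH Cons.prems(4) by auto
  define a where "a = nu_E E x"
  define b where "b = nu_E E y"
  define c where "c = nu_E E (x + y)"
  note px = nu_props[OF E0 ln Cons.prems(1), folded a_def]
  note py = nu_props[OF E0 ln Cons.prems(2), folded b_def]
  note pxy = nu_props[OF E0 ln Cons.prems(3), folded c_def]
  note fa = funpow_add_hom[OF add]
  show ?case
  proof (cases "a = b")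
    case False
    show ?thesis
    proof (cases "a < b")
      case True
      have "(E ^^ b) (x + y) = (E ^^ b) y" using fa px(2)[OF True] by simp
      moreover have "(E ^^ Suc b) (x + y) = 0"
      proof -
        have h1: "(E ^^ Suc b) x = 0" "(E ^^ Suc b) y = 0" by (rule px(2), use True in simp) (rule py(2), use True in simp)
        show ?thesis by (simp only: fa h1 add_0_left)
      qed
      ultimately have "c = b" unfolding c_def using py(1) by (intro nu_eqI[of E, OF E0]) auto
      then have "string_map (E # Es) (x + y) = string_map (E # Es) y"
        using \<open>(E ^^ b) (x + y) = (E ^^ b) y\<close> by (simp add: c_def b_def)
      then show ?thesis by (metis max.cobounded2)
    next
      case False
      then have ba: "b < a" using \<open>a \<noteq> b\<close> by simp
      have "(E ^^ a) (x + y) = (E ^^ a) x" using fa py(2)[OF ba] by simp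
      moreover have "(E ^^ Suc a) (x + y) = 0"
      proof -
        have h1: "(E ^^ Suc a) x = 0" "(E ^^ Suc a) y = 0" by (rule px(2), use ba in simp) (rule py(2), use ba in simp)
        show ?thesis by (simp only: fa h1 add_0_left)
      qed
      ultimately have "c = a" unfolding c_def using px(1) by (intro nu_eqI[of E, OF E0]) auto
      then have "string_map (E # Es) (x + y) = string_map (E # Es) x"
        using \<open>(E ^^ a) (x + y) = (E ^^ a) x\<close> by (simp add: c_def a_def)
      then show ?thesis by (metis max.cobounded1)
    qed
  next
    case True
    have "(E ^^ Suc a) (x + y) = 0"
    proof -
      have h1: "(E ^^ Suc a) x = 0" "(E ^^ Suc a) y = 0" by (rule px(2), use True in simp) (rule py(2), use True in simp)
      show ?thesis by (simp only: fa h1 add_0_left)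
    qed
    then have "c \<le> a" using pxy(1) funpow_vanish[of E "Suc a" "x+y" c, OF E0] by (metis not_less_eq_eq)
    show ?thesis
    proof (cases "c = a")
      case False
      then have "c < a" using \<open>c \<le> a\<close> by simp
      then have "string_map (E # Es) (x + y) < string_map (E # Es) x"
        by (simp add: c_def a_def)
      then show ?thesis
        using max.cobounded1[of "string_map (E#Es) x" "string_map (E#Es) y"]
        by (metis less_imp_le order_trans)
    next
      case ca: True
      have nz: "(E ^^ a) x + (E ^^ a) y \<noteq> 0" using pxy(1) ca fa by simp
      have "string_map Es ((E ^^ a) x + (E ^^ a) y)
          \<le> max (string_map Es ((E ^^ a) x)) (string_map Es ((E ^^ a) y))"
        using IH[OF px(1) py(1)[folded True] nz] .
      then show ?thesis using ca True fa
        by (simp add: c_def[symmetric] a_def[symmetric] b_def[symmetric] max_Cons)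
    qed
  qed
qed



lemma iota_props:
  assumes "k_algebra (\<iota> :: 'k::field \<Rightarrow> 'a::ring_1_no_zero_divisors)"
  shows iota1: "\<iota> 1 = 1" and iota_add: "\<iota> (c + d) = \<iota> c + \<iota> d"
    and iota_mult: "\<iota> (c * d) = \<iota> c * \<iota> d" and iota_comm: "\<iota> c * x = x * \<iota> c"
    and iota0: "\<iota> 0 = 0"
    and iota_nz: "c \<noteq> 0 \<Longrightarrow> \<iota> c \<noteq> 0"
    and iota_pow: "\<iota> (c ^ n) = \<iota> c ^ n"
proof -
  have A: "\<iota> 1 = 1" "\<forall>c d. \<iota> (c + d) = \<iota> c + \<iota> d"
    "\<forall>c d. \<iota> (c * d) = \<iota> c * \<iota> d" "\<forall>c x. \<iota> c * x = x * \<iota> c"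
    using assms unfolding k_algebra_def by blast+
  show i1: "\<iota> 1 = 1" by (rule A(1))
  show ia: "\<iota> (c + d) = \<iota> c + \<iota> d" using A(2) by blast
  show im: "\<iota> (c * d) = \<iota> c * \<iota> d" using A(3) by blast
  show "\<iota> c * x = x * \<iota> c" using A(4) by blast
  have "\<iota> 0 = \<iota> 0 + \<iota> 0" using A(2) by (metis add_0)
  then show "\<iota> 0 = 0" by simp
  show "c \<noteq> 0 \<Longrightarrow> \<iota> c \<noteq> 0"
  proof
    assume "c \<noteq> 0" "\<iota> c = 0"
    then have "\<iota> (c * inverse c) = 0" using A(3) by (metis mult_zero_left)
    with \<open>c \<noteq> 0\<close> i1 show False by simp
  qed
  show "\<iota> (c ^ n) = \<iota> c ^ n"
    by (induction n) (simp_all add: A(1) A(3))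
qed

lemma klin_props:
  assumes "k_linear \<iota> f"
  shows klin_add: "f (x + y) = f x + f y" and klin_sc: "f (\<iota> c * x) = \<iota> c * f x"
    and klin0: "f 0 = (0::'a::ring_1)"
  using assms unfolding k_linear_def by (auto, metis add_cancel_right_right)

lemma inv_string:
  fixes \<iota> :: "'k::field \<Rightarrow> 'a::ring_1_no_zero_divisors"
  assumes alg: "k_algebra \<iota>"
    and f0: "\<And>y. f y = 0 \<longleftrightarrow> y = 0"
    and fsc: "\<And>c y. f (\<iota> c * y) = \<iota> c * f y"
    and hyp: "\<forall>l \<in> set ls. k_linear \<iota> (d l) \<and> \<gamma> l \<noteq> 0 \<and> (\<forall>y. d l (f y) = \<iota> (\<gamma> l) * f (d l y))"
    and c: "c \<noteq> 0"
  shows "string_map (map d ls) (\<iota> c * (f ^^ s) x) = string_map (map d ls) x"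
  using hyp c
proof (induction ls arbitrary: x c)
  case Nil then show ?case by simp
next
  case (Cons l ls)
  define E where "E = d l"
  define g where "g = \<gamma> l"
  have lin: "k_linear \<iota> E" and g: "g \<noteq> 0" and cm: "\<And>y. E (f y) = \<iota> g * f (E y)"
    using Cons.prems unfolding E_def g_def by auto
  have fs0: "\<And>y. (f ^^ t) y = 0 \<longleftrightarrow> y = 0" for t by (induction t) (auto simp: f0)
  have fssc: "\<And>c y. (f ^^ t) (\<iota> c * y) = \<iota> c * (f ^^ t) y" for t by (induction t) (auto simp: fsc)
  have Ef: "E ((f ^^ t) y) = \<iota> (g ^ t) * (f ^^ t) (E y)" for t y
  proof (induction t)
    case 0 then show ?case using iota1[OF alg] by simp
  next
    case (Suc t)
    have "E ((f ^^ Suc t) y) = \<iota> g * f (E ((f ^^ t) y))" by (simp add: cm)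
    also have "\<dots> = \<iota> g * (\<iota> (g ^ t) * f ((f ^^ t) (E y)))" by (simp add: Suc fsc)
    also have "\<dots> = \<iota> (g ^ Suc t) * (f ^^ Suc t) (E y)"
      by (simp add: iota_mult[OF alg] mult.assoc)
    finally show ?case .
  qed
  have En: "(E ^^ n) (\<iota> c' * (f ^^ s) y) = \<iota> (c' * g ^ (n * s)) * (f ^^ s) ((E ^^ n) y)" for n c' y
  proof (induction n)
    case 0 then show ?case by simp
  next
    case (Suc n)
    have "(E ^^ Suc n) (\<iota> c' * (f ^^ s) y) = E (\<iota> (c' * g ^ (n * s)) * (f ^^ s) ((E ^^ n) y))"
      by (simp add: Suc)
    also have "\<dots> = \<iota> (c' * g ^ (n * s)) * (\<iota> (g ^ s) * (f ^^ s) ((E ^^ Suc n) y))"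
      by (simp add: klin_sc[OF lin] Ef)
    also have "\<dots> = \<iota> (c' * g ^ (n * s) * g ^ s) * (f ^^ s) ((E ^^ Suc n) y)"
      by (simp only: iota_mult[OF alg] mult.assoc)
    also have "c' * g ^ (n * s) * g ^ s = c' * g ^ (Suc n * s)"
      by (simp add: power_add algebra_simps)
    finally show ?case .
  qed
  have nz: "\<iota> c' * (f ^^ s) y = 0 \<longleftrightarrow> y = 0" if "c' \<noteq> 0" for c' y
    using iota_nz[OF alg that] fs0 by auto
  have cn: "c * g ^ (n * s) \<noteq> 0" for n using Cons.prems(2) g by simp
  have nueq: "nu_E E (\<iota> c * (f ^^ s) x) = nu_E E x"
    unfolding nu_E_def En using nz[OF cn] by simp
  have IH: "string_map (map d ls) (\<iota> c' * (f ^^ s) y) = string_map (map d ls) y" if "c' \<noteq> 0" for c' y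
    using Cons.IH Cons.prems(1) that by auto
  show ?case
    using IH[OF cn] by (simp add: E_def[symmetric] nueq En)
qed



fun qb :: "'k::field \<Rightarrow> nat \<Rightarrow> nat \<Rightarrow> 'k" where
  "qb q 0 j = (if j = 0 then 1 else 0)"
| "qb q (Suc n) j = q ^ j * qb q n j + (if j = 0 then 0 else qb q n (j - 1))"

definition qf :: "'k::field \<Rightarrow> nat \<Rightarrow> 'k" where
  "qf q n = (\<Prod>t\<in>{1..n}. 1 - q ^ t)"

lemma qb_gt: "n < j \<Longrightarrow> qb q n j = 0"
  by (induction n arbitrary: j) auto

lemma qb_0: "qb q n 0 = 1"
  by (induction n) auto

lemma qb_nn: "qb q n n = 1"
  by (induction n) (auto simp: qb_gt)

lemma qf_Suc: "qf q (Suc n) = qf q n * (1 - q ^ Suc n)"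
  unfolding qf_def by (simp add: prod.nat_ivl_Suc')

lemma qf_0: "qf q 0 = 1" unfolding qf_def by simp

lemma qf_nz:
  assumes nr: "\<not> root_of_unity q" shows "qf q n \<noteq> 0"
proof -
  have "1 - q ^ t \<noteq> 0" if "t \<in> {1..n}" for t
  proof
    assume "1 - q ^ t = 0"
    then have "t > 0 \<and> q ^ t = 1" using that by simp
    then show False using nr unfolding root_of_unity_def by blast
  qed
  then show ?thesis unfolding qf_def by simp
qed

lemma qb_prod: "j \<le> n \<Longrightarrow> qb q n j * qf q j * qf q (n - j) = qf q n"
proof (induction n arbitrary: j)
  case 0 then show ?case by (simp add: qf_0)
next
  case (Suc n)
  show ?case
  proof (cases "j = 0")
    case True then show ?thesis by (simp add: qb_0 qf_0)
  next
    case False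
    then obtain j' where j': "j = Suc j'" by (cases j) auto
    show ?thesis
    proof (cases "j = Suc n")
      case True then show ?thesis by (simp add: qb_nn qf_0 del: qb.simps)
    next
      case False
      then have jn: "j' < n" using Suc.prems j' by simp
      have IH1: "qb q n (Suc j') * qf q (Suc j') * qf q (n - Suc j') = qf q n"
        using Suc.IH jn by simp
      have IH2: "qb q n j' * qf q j' * qf q (n - j') = qf q n"
        using Suc.IH jn by simp
      have nj: "n - j' = Suc (n - Suc j')" using jn by simp
      have pw: "q ^ Suc j' * q ^ (n - j') = q ^ Suc n"
        using jn by (simp add: power_add[symmetric])
      have "qb q (Suc n) j * qf q j * qf q (Suc n - j)
          = (q ^ Suc j' * qb q n (Suc j') + qb q n j') * qf q (Suc j') * qf q (n - j')"
        using j' by simp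
      also have "\<dots> = q ^ Suc j' * (qb q n (Suc j') * qf q (Suc j') * qf q (n - Suc j')) * (1 - q ^ (n - j'))
           + (qb q n j' * qf q j' * qf q (n - j')) * (1 - q ^ Suc j')"
        unfolding nj qf_Suc by (simp add: algebra_simps)
      also have "\<dots> = qf q n * (q ^ Suc j' - q ^ Suc j' * q ^ (n - j') + 1 - q ^ Suc j')"
        unfolding IH1 IH2 by (simp add: algebra_simps)
      also have "\<dots> = qf q (Suc n)" unfolding pw qf_Suc by (simp add: algebra_simps)
      finally show ?thesis .
    qed
  qed
qed

lemma qb_nz: "\<not> root_of_unity q \<Longrightarrow> j \<le> n \<Longrightarrow> qb q n j \<noteq> 0"
  using qb_prod[of j n q] qf_nz[of q n] by auto



locale skctx =
  fixes \<iota> :: "'k::field \<Rightarrow> 'a::ring_1_no_zero_divisors" and \<phi> D :: "'a \<Rightarrow> 'a" and q :: 'k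
  assumes alg: "k_algebra \<iota>" and aut: "algebra_automorphism \<iota> \<phi>"
    and skew: "skew_derivation \<iota> \<phi> D" and comm: "\<And>x. D (\<phi> x) = \<iota> q * \<phi> (D x)"
    and nroot: "\<not> root_of_unity q" and lnil: "locally_nilpotent D"
begin

lemma Dlin: "k_linear \<iota> D" using skew unfolding skew_derivation_def by simp
lemma Dmul: "D (x * y) = D x * y + \<phi> x * D y" using skew unfolding skew_derivation_def by simp
lemma philin: "k_linear \<iota> \<phi>" using aut unfolding algebra_automorphism_def by simp
lemma phimul: "\<phi> (x * y) = \<phi> x * \<phi> y" using aut unfolding algebra_automorphism_def by simp
lemma phi0: "\<phi> x = 0 \<longleftrightarrow> x = 0"
proof -
  have "inj \<phi>" using aut unfolding algebra_automorphism_def bij_def by simp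
  moreover have "\<phi> 0 = 0" using klin0[OF philin] .
  ultimately show ?thesis by (metis injD)
qed

lemma D0: "D 0 = 0" using klin0[OF Dlin] .

lemma phis0: "(\<phi> ^^ j) x = 0 \<longleftrightarrow> x = 0" by (induction j) (auto simp: phi0)

lemma Dphis: "D ((\<phi> ^^ j) u) = \<iota> (q ^ j) * (\<phi> ^^ j) (D u)"
proof (induction j)
  case 0 then show ?case by (simp add: iota1[OF alg])
next
  case (Suc j)
  have "D ((\<phi> ^^ Suc j) u) = \<iota> q * \<phi> (\<iota> (q ^ j) * (\<phi> ^^ j) (D u))" by (simp add: comm Suc)
  also have "\<dots> = \<iota> (q ^ Suc j) * (\<phi> ^^ Suc j) (D u)"
    by (simp add: klin_sc[OF philin] iota_mult[OF alg] mult.assoc)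
  finally show ?case .
qed

lemma Dsum: "D (\<Sum>i\<in>A. f i) = (\<Sum>i\<in>A. D (f i))"
  using sum_comp_morphism[of D f A, OF D0 klin_add[OF Dlin]] by (simp add: comp_def)

lemma leibniz:
  "(D ^^ n) (a * b) = (\<Sum>j\<le>n. \<iota> (qb q n j) * ((\<phi> ^^ j) ((D ^^ (n - j)) a) * (D ^^ j) b))"
proof (induction n)
  case 0 then show ?case by (simp add: iota1[OF alg])
next
  case (Suc n)
  define T where "T = (\<lambda>n j. (\<phi> ^^ j) ((D ^^ (n - j)) a) * (D ^^ j) b)"
  define C where "C = qb q n"
  have DT: "D (T n j) = \<iota> (q ^ j) * T (Suc n) j + T (Suc n) (Suc j)" if "j \<le> n" for j
  proof -
    have e1: "Suc n - j = Suc (n - j)" using that by simp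
    have "D (T n j) = D ((\<phi> ^^ j) ((D ^^ (n - j)) a)) * (D ^^ j) b
        + \<phi> ((\<phi> ^^ j) ((D ^^ (n - j)) a)) * D ((D ^^ j) b)"
      unfolding T_def by (rule Dmul)
    also have "\<dots> = \<iota> (q ^ j) * T (Suc n) j + T (Suc n) (Suc j)"
      unfolding T_def Dphis e1 by (simp add: mult.assoc)
    finally show ?thesis .
  qed
  have "(D ^^ Suc n) (a * b) = D (\<Sum>j\<le>n. \<iota> (C j) * T n j)"
    by (simp add: Suc T_def C_def)
  also have "\<dots> = (\<Sum>j\<le>n. \<iota> (C j) * D (T n j))"
    by (simp add: Dsum klin_sc[OF Dlin])
  also have "\<dots> = (\<Sum>j\<le>n. \<iota> (q ^ j * C j) * T (Suc n) j) + (\<Sum>j\<le>n. \<iota> (C j) * T (Suc n) (Suc j))"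
    by (simp add: DT sum.distrib distrib_left iota_mult[OF alg] mult.assoc mult.commute)
  also have "(\<Sum>j\<le>n. \<iota> (q ^ j * C j) * T (Suc n) j) = (\<Sum>j\<le>Suc n. \<iota> (q ^ j * C j) * T (Suc n) j)"
    by (simp add: C_def qb_gt iota0[OF alg])
  also have "(\<Sum>j\<le>n. \<iota> (C j) * T (Suc n) (Suc j))
      = (\<Sum>j\<le>Suc n. \<iota> (if j = 0 then 0 else C (j - 1)) * T (Suc n) j)"
    by (subst sum.atMost_Suc_shift) (simp add: iota0[OF alg])
  also have "(\<Sum>j\<le>Suc n. \<iota> (q ^ j * C j) * T (Suc n) j)
      + (\<Sum>j\<le>Suc n. \<iota> (if j = 0 then 0 else C (j - 1)) * T (Suc n) j)
      = (\<Sum>j\<le>Suc n. \<iota> (qb q (Suc n) j) * T (Suc n) j)"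
    unfolding C_def by (simp add: sum.distrib[symmetric] iota_add[OF alg] distrib_right)
  finally show ?case by (simp add: T_def)
qed

lemma nu_mult:
  assumes a: "a \<noteq> 0" and b: "b \<noteq> 0"
  shows "nu_E D (a * b) = nu_E D a + nu_E D b \<and>
    (D ^^ (nu_E D a + nu_E D b)) (a * b)
      = \<iota> (qb q (nu_E D a + nu_E D b) (nu_E D b)) * ((\<phi> ^^ nu_E D b) ((D ^^ nu_E D a) a) * (D ^^ nu_E D b) b)"
proof -
  define r where "r = nu_E D a"
  define s where "s = nu_E D b"
  note pa = nu_props[OF D0 lnil a, folded r_def]
  note pb = nu_props[OF D0 lnil b, folded s_def]
  define T where "T = (\<lambda>n j. \<iota> (qb q n j) * ((\<phi> ^^ j) ((D ^^ (n - j)) a) * (D ^^ j) b))"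
  have v1: "(D ^^ (r + s)) (a * b) = T (r + s) s"
  proof -
    have "(D ^^ (r + s)) (a * b) = (\<Sum>j\<le>r + s. T (r + s) j)" unfolding leibniz T_def ..
    also have "\<dots> = (\<Sum>j\<in>{s}. T (r + s) j)"
    proof (rule sum.mono_neutral_right)
      show "\<forall>i\<in>{..r + s} - {s}. T (r + s) i = 0"
      proof
        fix i assume i: "i \<in> {..r + s} - {s}"
        show "T (r + s) i = 0"
        proof (cases "i < s")
          case True
          then have "(D ^^ (r + s - i)) a = 0" by (intro pa(2)) simp
          then show ?thesis unfolding T_def by (simp add: phis0)
        next
          case False
          then have "(D ^^ i) b = 0" using i by (intro pb(2)) auto
          then show ?thesis unfolding T_def by simp
        qed
      qed
    qed auto
    finally show ?thesis by simp
  qed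
  have v2: "(D ^^ Suc (r + s)) (a * b) = 0"
  proof -
    have "(D ^^ Suc (r + s)) (a * b) = (\<Sum>j\<le>Suc (r + s). T (Suc (r + s)) j)" unfolding leibniz T_def ..
    also have "\<dots> = 0"
    proof (rule sum.neutral, rule ballI)
      fix i assume i: "i \<in> {..Suc (r + s)}"
      show "T (Suc (r + s)) i = 0"
      proof (cases "i \<le> s")
        case True
        then have "(D ^^ (Suc (r + s) - i)) a = 0" by (intro pa(2)) simp
        then show ?thesis unfolding T_def by (simp add: phis0)
      next
        case False
        then have "(D ^^ i) b = 0" by (intro pb(2)) auto
        then show ?thesis unfolding T_def by simp
      qed
    qed
    finally show ?thesis .
  qed
  have nz: "T (r + s) s \<noteq> 0"
    unfolding T_def using iota_nz[OF alg qb_nz[OF nroot, of s "r + s"]] pa(1) pb(1)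
    by (simp add: phis0)
  have "nu_E D (a * b) = r + s"
    by (rule nu_eqI[of D, OF D0]) (use v1 v2 nz in auto)
  then show ?thesis using v1 unfolding T_def r_def s_def by simp
qed

end



lemma vec_add_Cons: "vec_add (r # u) (s # v) = (r + s) # vec_add u v"
  by (simp add: vec_add_def)

theorem mainTheorem12:
  fixes \<iota> :: "'k::field \<Rightarrow> 'a::ring_1_no_zero_divisors"
    and m :: nat
    and \<phi> :: "nat \<Rightarrow> 'a \<Rightarrow> 'a"
    and d :: "nat \<Rightarrow> 'a \<Rightarrow> 'a"
    and q :: "nat \<Rightarrow> nat \<Rightarrow> 'k"
  assumes alg: "k_algebra \<iota>"
    and aut: "\<And>k. 1 \<le> k \<Longrightarrow> k \<le> m \<Longrightarrow> algebra_automorphism \<iota> (\<phi> k)"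
    and skew: "\<And>k. 1 \<le> k \<Longrightarrow> k \<le> m \<Longrightarrow> skew_derivation \<iota> (\<phi> k) (d k)"
    and lnil: "\<And>k. 1 \<le> k \<Longrightarrow> k \<le> m \<Longrightarrow> locally_nilpotent (d k)"
    and qnz: "\<And>k l. 1 \<le> k \<Longrightarrow> k \<le> l \<Longrightarrow> l \<le> m \<Longrightarrow> q k l \<noteq> 0"
    and comm: "\<And>k l x. 1 \<le> k \<Longrightarrow> k \<le> l \<Longrightarrow> l \<le> m \<Longrightarrow>
                 d l (\<phi> k x) = \<iota> (q k l) * \<phi> k (d l x)"
    and nroot: "\<And>k. 1 \<le> k \<Longrightarrow> k \<le> m \<Longrightarrow> \<not> root_of_unity (q k k)"
  defines "\<nu> \<equiv> string_map (map d [1..<m+1])"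
  shows "(\<forall>c x. c \<noteq> 0 \<longrightarrow> x \<noteq> 0 \<longrightarrow> \<nu> (\<iota> c * x) = \<nu> x)
       \<and> (\<forall>x y. x \<noteq> 0 \<longrightarrow> y \<noteq> 0 \<longrightarrow> x + y \<noteq> 0 \<longrightarrow> \<nu> (x + y) \<le> max (\<nu> x) (\<nu> y))
       \<and> (\<forall>a b. a \<noteq> 0 \<longrightarrow> b \<noteq> 0 \<longrightarrow> \<nu> (a * b) = vec_add (\<nu> a) (\<nu> b))"
proof (intro conjI allI impI)
  have lin: "k_linear \<iota> (d l)" if "1 \<le> l" "l \<le> m" for l
    using skew[OF that] unfolding skew_derivation_def by simp
  fix c x :: 'a
  show "c \<noteq> 0 \<Longrightarrow> x \<noteq> 0 \<Longrightarrow> \<nu> (\<iota> c * x) = \<nu> x" for c x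
  proof -
    assume c: "c \<noteq> 0"
    have h: "\<forall>l\<in>set [1..<m+1]. k_linear \<iota> (d l) \<and> (1::'k) \<noteq> 0 \<and> (\<forall>y. d l (id y) = \<iota> 1 * id (d l y))"
      using lin by (auto simp: iota1[OF alg])
    have "string_map (map d [1..<m+1]) (\<iota> c * (id ^^ 0) x) = string_map (map d [1..<m+1]) x"
      by (rule inv_string[OF alg _ _ h c]) auto
    then show ?thesis unfolding \<nu>_def by simp
  qed
next
  fix x y :: 'a
  assume xy: "x \<noteq> 0" "y \<noteq> 0" "x + y \<noteq> 0"
  have H: "\<forall>E \<in> set (map d [1..<m+1]). (\<forall>x y. E (x + y) = E x + E y) \<and> locally_nilpotent E"
  proof
    fix E assume "E \<in> set (map d [1..<m+1])"
    then obtain l where "1 \<le> l" "l \<le> m" "E = d l" by auto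
    with lnil skew show "(\<forall>x y. E (x + y) = E x + E y) \<and> locally_nilpotent E"
      unfolding skew_derivation_def k_linear_def by auto
  qed
  show "\<nu> (x + y) \<le> max (\<nu> x) (\<nu> y)"
    unfolding \<nu>_def by (rule val_string[OF H xy])
next
  have main: "sorted ls \<Longrightarrow> \<forall>l\<in>set ls. 1 \<le> l \<and> l \<le> m \<Longrightarrow> a \<noteq> 0 \<Longrightarrow> b \<noteq> 0 \<Longrightarrow>
      string_map (map d ls) (a * b) = vec_add (string_map (map d ls) a) (string_map (map d ls) b)"
    for ls and a b :: 'a
  proof (induction ls arbitrary: a b)
    case Nil then show ?case by (simp add: vec_add_def)
  next
    case (Cons k ls)
    have k: "1 \<le> k" "k \<le> m" using Cons.prems by auto
    note skewA = skew and commA = comm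
    interpret skctx \<iota> "\<phi> k" "d k" "q k k"
      using alg aut[OF k] skew[OF k] comm[OF k(1) order_refl k(2)] nroot[OF k] lnil[OF k]
      by unfold_locales auto
    define r where "r = nu_E (d k) a"
    define s where "s = nu_E (d k) b"
    have nm: "nu_E (d k) (a * b) = r + s"
      and ev: "(d k ^^ (r + s)) (a * b) = \<iota> (qb (q k k) (r + s) s) * ((\<phi> k ^^ s) ((d k ^^ r) a) * (d k ^^ s) b)"
      using nu_mult[OF Cons.prems(3,4)] unfolding r_def s_def by auto
    have A: "(d k ^^ r) a \<noteq> 0" using nu_props[OF D0 lnil Cons.prems(3)] r_def by simp
    have B: "(d k ^^ s) b \<noteq> 0" using nu_props[OF D0 lnil Cons.prems(4)] s_def by simp
    have cnz: "qb (q k k) (r + s) s \<noteq> 0" using qb_nz[OF nroot] by simp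
    have A': "\<iota> (qb (q k k) (r + s) s) * (\<phi> k ^^ s) ((d k ^^ r) a) \<noteq> 0"
      using iota_nz[OF alg cnz] A phis0 by simp
    have sl: "sorted ls" "\<forall>l\<in>set ls. 1 \<le> l \<and> l \<le> m" "\<forall>l\<in>set ls. k \<le> l"
      using Cons.prems by auto
    have inv: "string_map (map d ls) (\<iota> (qb (q k k) (r + s) s) * (\<phi> k ^^ s) ((d k ^^ r) a))
        = string_map (map d ls) ((d k ^^ r) a)"
    proof (rule inv_string[OF alg])
      show "\<And>y. \<phi> k y = 0 \<longleftrightarrow> y = 0" by (rule phi0)
      show "\<And>c y. \<phi> k (\<iota> c * y) = \<iota> c * \<phi> k y" by (rule klin_sc[OF philin])
      show "\<forall>l\<in>set ls. k_linear \<iota> (d l) \<and> q k l \<noteq> 0 \<and> (\<forall>y. d l (\<phi> k y) = \<iota> (q k l) * \<phi> k (d l y))"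
        using sl skewA qnz commA k unfolding skew_derivation_def by auto
    qed (rule cnz)
    have "string_map (map d (k # ls)) (a * b)
        = (r + s) # string_map (map d ls) ((\<iota> (qb (q k k) (r + s) s) * (\<phi> k ^^ s) ((d k ^^ r) a)) * (d k ^^ s) b)"
      using nm ev by (simp add: mult.assoc)
    also have "\<dots> = (r + s) # vec_add (string_map (map d ls) ((d k ^^ r) a)) (string_map (map d ls) ((d k ^^ s) b))"
      using Cons.IH[OF sl(1,2) A' B] inv by simp
    also have "\<dots> = vec_add (string_map (map d (k # ls)) a) (string_map (map d (k # ls)) b)"
      by (simp add: vec_add_Cons r_def s_def)
    finally show ?case .
  qed
  fix a b :: 'a assume "a \<noteq> 0" "b \<noteq> 0"
  then show "\<nu> (a * b) = vec_add (\<nu> a) (\<nu> b)"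
    unfolding \<nu>_def by (intro main) (simp_all only: sorted_upt, auto)
qed


end
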